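(* Let $\Gamma=\{1,\gamma\}=\mathrm{Gal}(\mathbb C/\mathbb R)$. Let $H$ be a connected reductive complex algebraic group (identified with its $\mathbb C$-points) and $1\to H\to E\xrightarrow{\pi}\Gamma\to1$ an extension of abstract groups such that every element of $E_\gamma=\pi^{-1}(\gamma)$ acts on $H$ by conjugation via an anti-regular automorphism. Fix a pinning $(T,B,\{X_\alpha\})$ of $H$ and let $x'\in E_\gamma$ be such that $\tau_H:=\mathrm{inn}(x')|_H$ preserves the pinning; then $h':=(x')^2\in C:=Z(H)$ and $\mathbf H=(H,\tau_H)$ is a real algebraic group with center $\mathbf C=(C,\tau_H|_C)$, and $h'\in Z^2\mathbf C$. Let $\Delta\colon H^1(\mathbf H/\mathbf C)\to H^2\mathbf C$ be the connecting map of the exact sequence $1\to\mathbf C\to\mathbf H\to\mathbf H/\mathbf C\to1$. Then the following are equivalent: (i) there exists $x\in E_\gamma$ with $x^2=1$; (ii) $(h')^{-1}=b\,\tau_H(b)$ for some $b\in H$; (iii) $[(h')^{-1}]\in\mathrm{im}\,\Delta$.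
   Context: Anti-regular map of complex affine varieties: $\varphi$ such that $x\mapsto\overline{f(\varphi(x))}$ is regular for every regular $f$. A real algebraic group is a pair $(G,\tau)$, $\tau$ an anti-regular involutive automorphism of the complex linear algebraic group $G$. A pinning of $H$: a maximal torus $T$, a Borel subgroup $B\supset T$, and nonzero $X_\alpha$ in the root space of each simple root $\alpha$. For a real group $\mathbf G=(G,\tau)$: $Z^1\mathbf G=\{z\in G: z\tau(z)=1\}$, $z\sim b^{-1}z\tau(b)$, $H^1\mathbf G=Z^1\mathbf G/\sim$. For commutative $\mathbf A=(A,\tau)$: $Z^2\mathbf A=A^\tau$, $B^2\mathbf A=\{a\tau(a)\}$, $H^2\mathbf A=Z^2\mathbf A/B^2\mathbf A$. The connecting map sends the class of $z\in Z^1(\mathbf H/\mathbf C)$ to the class of $\tilde z\tau_H(\tilde z)\in Z^2\mathbf C$ for any lift $\tilde z\in H$ of $z$. *)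

theory Defs
  imports "HOL-Algebra.Algebra"
begin

text \<open>Abstract-group rendering of the real-group Galois cohomology used in
Corollary 7.6.  The ambient group is E; H is a subgroup of E; the real
structure on H is tau_H = conjugation by a fixed element x' of E.\<close>

definition tauH :: "('e,'m) monoid_scheme \<Rightarrow> 'e \<Rightarrow> 'e \<Rightarrow> 'e" where
  "tauH E x h = x \<otimes>\<^bsub>E\<^esub> h \<otimes>\<^bsub>E\<^esub> inv\<^bsub>E\<^esub> x"

definition center_of :: "('e,'m) monoid_scheme \<Rightarrow> 'e set \<Rightarrow> 'e set" where
  "center_of E H = {c \<in> H. \<forall>h\<in>H. c \<otimes>\<^bsub>E\<^esub> h = h \<otimes>\<^bsub>E\<^esub> c}"

definition quot_elems :: "('e,'m) monoid_scheme \<Rightarrow> 'e set \<Rightarrow> 'e set \<Rightarrow> 'e set set" where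
  "quot_elems E H C = {C #>\<^bsub>E\<^esub> z | z. z \<in> H}"

definition Z1_quot :: "('e,'m) monoid_scheme \<Rightarrow> 'e \<Rightarrow> 'e set \<Rightarrow> 'e set \<Rightarrow> 'e set set" where
  "Z1_quot E x H C = {u \<in> quot_elems E H C. u <#>\<^bsub>E\<^esub> (tauH E x ` u) = C}"

definition coh_rel_quot :: "('e,'m) monoid_scheme \<Rightarrow> 'e \<Rightarrow> 'e set \<Rightarrow> 'e set \<Rightarrow> ('e set \<times> 'e set) set" where
  "coh_rel_quot E x H C = {(u, v). u \<in> Z1_quot E x H C \<and> v \<in> Z1_quot E x H C \<and>
      (\<exists>b\<in>H. v = (C #>\<^bsub>E\<^esub> inv\<^bsub>E\<^esub> b) <#>\<^bsub>E\<^esub> u <#>\<^bsub>E\<^esub> (C #>\<^bsub>E\<^esub> tauH E x b))}"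

definition H1_quot :: "('e,'m) monoid_scheme \<Rightarrow> 'e \<Rightarrow> 'e set \<Rightarrow> 'e set \<Rightarrow> 'e set set set" where
  "H1_quot E x H C = Z1_quot E x H C // coh_rel_quot E x H C"

definition Z2 :: "('e,'m) monoid_scheme \<Rightarrow> 'e \<Rightarrow> 'e set \<Rightarrow> 'e set" where
  "Z2 E x C = {a \<in> C. tauH E x a = a}"

definition B2 :: "('e,'m) monoid_scheme \<Rightarrow> 'e \<Rightarrow> 'e set \<Rightarrow> 'e set" where
  "B2 E x C = {c \<otimes>\<^bsub>E\<^esub> tauH E x c | c. c \<in> C}"

definition H2_class :: "('e,'m) monoid_scheme \<Rightarrow> 'e \<Rightarrow> 'e set \<Rightarrow> 'e \<Rightarrow> 'e set" where
  "H2_class E x C a = a <#\<^bsub>E\<^esub> B2 E x C"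

definition H2 :: "('e,'m) monoid_scheme \<Rightarrow> 'e \<Rightarrow> 'e set \<Rightarrow> 'e set set" where
  "H2 E x C = H2_class E x C ` Z2 E x C"

definition connecting :: "('e,'m) monoid_scheme \<Rightarrow> 'e \<Rightarrow> 'e set \<Rightarrow> 'e set \<Rightarrow> 'e set set \<Rightarrow> 'e set" where
  "connecting E x H C \<xi> = (SOME k. \<exists>zt\<in>H. (C #>\<^bsub>E\<^esub> zt) \<in> \<xi> \<and>
       k = H2_class E x C (zt \<otimes>\<^bsub>E\<^esub> tauH E x zt))"

end

theory Submission
  imports Defs
begin

locale cset = group E for E (structure) +
  fixes H C x
  assumes Hsub: "H \<subseteq> carrier E" and H1: "\<one> \<in> H"
    and Hm: "\<And>a b. a \<in> H \<Longrightarrow> b \<in> H \<Longrightarrow> a \<otimes> b \<in> H"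
    and Hi: "\<And>a. a \<in> H \<Longrightarrow> inv a \<in> H"
    and Cdef: "C = center_of E H"
    and xc: "x \<in> carrier E"
    and tH: "\<And>h. h \<in> H \<Longrightarrow> x \<otimes> h \<otimes> inv x \<in> H"
    and tHi: "\<And>h. h \<in> H \<Longrightarrow> inv x \<otimes> h \<otimes> x \<in> H"
    and xx: "x \<otimes> x \<in> C"
begin

lemma canc1[simp]: "a \<in> carrier E \<Longrightarrow> b \<in> carrier E \<Longrightarrow> a \<otimes> (inv a \<otimes> b) = b"
  by (simp add: m_assoc[symmetric])
lemma canc2[simp]: "a \<in> carrier E \<Longrightarrow> b \<in> carrier E \<Longrightarrow> inv a \<otimes> (a \<otimes> b) = b"
  by (simp add: m_assoc[symmetric])

abbreviation t where "t h \<equiv> tauH E x h"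

lemma tdef: "t h = x \<otimes> h \<otimes> inv x" by (simp add: tauH_def)

lemma Hc: "h \<in> H \<Longrightarrow> h \<in> carrier E" using Hsub by auto

lemma Cmem: "c \<in> C \<longleftrightarrow> c \<in> H \<and> (\<forall>h\<in>H. c \<otimes> h = h \<otimes> c)" by (simp add: Cdef center_of_def)
lemma CH: "c \<in> C \<Longrightarrow> c \<in> H" using Cmem[of c] by blast
lemma Cc: "c \<in> C \<Longrightarrow> c \<in> carrier E" using CH Hc by auto
lemma Ccomm: "c \<in> C \<Longrightarrow> h \<in> H \<Longrightarrow> c \<otimes> h = h \<otimes> c" using Cmem[of c] by blast
lemma C1: "\<one> \<in> C" using Cmem[of \<one>] H1 Hc by simp
lemma Cm: "a \<in> C \<Longrightarrow> b \<in> C \<Longrightarrow> a \<otimes> b \<in> C"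
proof -
  assume a: "a \<in> C" and b: "b \<in> C"
  have "\<forall>h\<in>H. a \<otimes> b \<otimes> h = h \<otimes> (a \<otimes> b)"
  proof
    fix h assume h: "h \<in> H"
    have "a \<otimes> b \<otimes> h = a \<otimes> (h \<otimes> b)" using a b h Ccomm[of b h] by (simp add: m_assoc Cc Hc)
    also have "\<dots> = (a \<otimes> h) \<otimes> b" by (simp add: m_assoc Cc Hc a b h)
    also have "\<dots> = h \<otimes> (a \<otimes> b)" using a b h Ccomm[of a h] by (simp add: m_assoc Cc Hc)
    finally show "a \<otimes> b \<otimes> h = h \<otimes> (a \<otimes> b)" .
  qed
  then show ?thesis using Cmem[of "a \<otimes> b"] Hm[OF CH[OF a] CH[OF b]] by blast
qed
lemma Ci: "a \<in> C \<Longrightarrow> inv a \<in> C"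
proof -
  assume a: "a \<in> C"
  have "\<forall>h\<in>H. inv a \<otimes> h = h \<otimes> inv a"
  proof
    fix h assume h: "h \<in> H"
    have "a \<otimes> h = h \<otimes> a" using Ccomm[OF a h] .
    then have e: "inv a \<otimes> (a \<otimes> h) \<otimes> inv a = inv a \<otimes> (h \<otimes> a) \<otimes> inv a" by simp
    have "inv a \<otimes> (a \<otimes> h) \<otimes> inv a = h \<otimes> inv a" using a h Cc Hc by simp
    moreover have "inv a \<otimes> (h \<otimes> a) \<otimes> inv a = inv a \<otimes> h" using a h Cc Hc by (simp add: m_assoc)
    ultimately show "inv a \<otimes> h = h \<otimes> inv a" using e by simp
  qed
  then show ?thesis using Cmem[of "inv a"] Hi[OF CH[OF a]] by blast
qed

lemma tc: "h \<in> carrier E \<Longrightarrow> t h \<in> carrier E" using xc by (simp add: tdef)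
lemma tHH: "h \<in> H \<Longrightarrow> t h \<in> H" using tH by (simp add: tdef)
lemma tmult: "a \<in> carrier E \<Longrightarrow> b \<in> carrier E \<Longrightarrow> t (a \<otimes> b) = t a \<otimes> t b"
  using xc by (simp add: tdef m_assoc)
lemma tone: "t \<one> = \<one>" using xc by (simp add: tdef)
lemma tinv: "a \<in> carrier E \<Longrightarrow> t (inv a) = inv (t a)"
  using xc by (simp add: tdef inv_mult_group m_assoc)
lemma tC: "c \<in> C \<Longrightarrow> t c \<in> C"
proof -
  assume c: "c \<in> C"
  have "\<forall>h\<in>H. t c \<otimes> h = h \<otimes> t c"
  proof
    fix h assume h: "h \<in> H"
    define k where "k = inv x \<otimes> h \<otimes> x"
    have k: "k \<in> H" using tHi h k_def by auto
    have hk: "h = x \<otimes> k \<otimes> inv x" using xc h Hc unfolding k_def by (simp add: m_assoc)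
    have ck: "c \<otimes> k = k \<otimes> c" using Ccomm[OF c k] .
    have "t c \<otimes> h = x \<otimes> (c \<otimes> k) \<otimes> inv x" unfolding hk tdef using xc c k Cc Hc by (simp add: m_assoc)
    also have "\<dots> = x \<otimes> (k \<otimes> c) \<otimes> inv x" using ck by simp
    also have "\<dots> = h \<otimes> t c" unfolding hk tdef using xc c k Cc Hc by (simp add: m_assoc)
    finally show "t c \<otimes> h = h \<otimes> t c" .
  qed
  then show ?thesis using Cmem[of "t c"] tHH[OF CH[OF c]] by blast
qed
lemma tt: "h \<in> H \<Longrightarrow> t (t h) = h"
proof -
  assume h: "h \<in> H"
  have "t (t h) = (x \<otimes> x) \<otimes> h \<otimes> inv (x \<otimes> x)" using xc h Hc by (simp add: tdef m_assoc inv_mult_group)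
  also have "\<dots> = h \<otimes> (x \<otimes> x) \<otimes> inv (x \<otimes> x)" using Ccomm[OF xx h] by simp
  also have "\<dots> = h" using xc h Hc by (simp add: m_assoc)
  finally show ?thesis .
qed

lemma rc_mem: "y \<in> C #> z \<longleftrightarrow> (\<exists>c\<in>C. y = c \<otimes> z)" unfolding r_coset_def by auto
lemma sm_mem: "y \<in> A <#> B \<longleftrightarrow> (\<exists>a\<in>A. \<exists>b\<in>B. y = a \<otimes> b)" unfolding set_mult_def by auto
lemma lc_mem: "y \<in> a <# B \<longleftrightarrow> (\<exists>b\<in>B. y = a \<otimes> b)" unfolding l_coset_def by auto

lemma Ccomm3: "c \<in> C \<Longrightarrow> h \<in> H \<Longrightarrow> a \<in> carrier E \<Longrightarrow> c \<otimes> (h \<otimes> a) = h \<otimes> (c \<otimes> a)"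
  by (metis Ccomm Cc Hc m_assoc)

lemma B2_mem: "d \<in> B2 E x C \<longleftrightarrow> (\<exists>c\<in>C. d = c \<otimes> t c)" unfolding B2_def by auto

lemma tCm: "a \<in> C \<Longrightarrow> b \<in> C \<Longrightarrow> (a \<otimes> b) \<otimes> t (a \<otimes> b) = (a \<otimes> t a) \<otimes> (b \<otimes> t b)"
proof -
  assume a: "a \<in> C" and b: "b \<in> C"
  have "(a \<otimes> b) \<otimes> t (a \<otimes> b) = a \<otimes> (b \<otimes> (t a \<otimes> t b))"
    using a b by (simp add: tmult Cc m_assoc tc)
  also have "\<dots> = a \<otimes> (t a \<otimes> (b \<otimes> t b))" by (simp only: Ccomm3[OF b CH[OF tC[OF a]] tc[OF Cc[OF b]]])
  also have "\<dots> = (a \<otimes> t a) \<otimes> (b \<otimes> t b)" using a b by (simp add: Cc m_assoc tc)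
  finally show ?thesis .
qed

lemma class_shift: "s \<in> carrier E \<Longrightarrow> c \<in> C \<Longrightarrow> H2_class E x C (s \<otimes> (c \<otimes> t c)) = H2_class E x C s"
proof -
  assume s: "s \<in> carrier E" and c: "c \<in> C"
  have ct: "t c \<in> C" using tC c by auto
  show ?thesis unfolding H2_class_def
  proof (intro equalityI subsetI)
    fix y assume "y \<in> (s \<otimes> (c \<otimes> t c)) <# B2 E x C"
    then obtain c' where c': "c' \<in> C" "y = (s \<otimes> (c \<otimes> t c)) \<otimes> (c' \<otimes> t c')" by (auto simp: lc_mem B2_mem)
    have "y = s \<otimes> ((c \<otimes> c') \<otimes> t (c \<otimes> c'))" using c' c ct s tCm[of c c'] tC Cc by (simp add: m_assoc)
    moreover have "(c \<otimes> c') \<otimes> t (c \<otimes> c') \<in> B2 E x C" using Cm c c' unfolding B2_mem by blast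
    ultimately show "y \<in> s <# B2 E x C" unfolding lc_mem by blast
  next
    fix y assume "y \<in> s <# B2 E x C"
    then obtain c' where c': "c' \<in> C" "y = s \<otimes> (c' \<otimes> t c')" by (auto simp: lc_mem B2_mem)
    have e: "c \<otimes> (inv c \<otimes> c') = c'" using c c' Cc by simp
    have "y = (s \<otimes> (c \<otimes> t c)) \<otimes> ((inv c \<otimes> c') \<otimes> t (inv c \<otimes> c'))"
      using c' c ct s tCm[of c "inv c \<otimes> c'"] tC Cc Ci Cm e by (simp add: m_assoc)
    moreover have "(inv c \<otimes> c') \<otimes> t (inv c \<otimes> c') \<in> B2 E x C" using Cm Ci c c' unfolding B2_mem by blast
    ultimately show "y \<in> (s \<otimes> (c \<otimes> t c)) <# B2 E x C" unfolding lc_mem by blast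
  qed
qed

lemma tau_img: "b \<in> H \<Longrightarrow> y \<in> t ` (C #> b) \<longleftrightarrow> (\<exists>c\<in>C. y = t c \<otimes> t b)"
proof -
  assume b: "b \<in> H"
  have "t ` (C #> b) = (\<lambda>c. t c \<otimes> t b) ` C" unfolding r_coset_def using b by (force simp: tmult Cc Hc)
  then show ?thesis by (simp add: image_iff)
qed

lemma Z1_intro: "b \<in> H \<Longrightarrow> b \<otimes> t b \<in> C \<Longrightarrow> C #> b \<in> Z1_quot E x H C"
proof -
  assume b: "b \<in> H" and bt: "b \<otimes> t b \<in> C"
  have tb: "t b \<in> H" using tHH b by auto
  have "(C #> b) <#> (t ` (C #> b)) = C"
  proof (intro equalityI subsetI)
    fix y assume "y \<in> (C #> b) <#> (t ` (C #> b))"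
    then obtain a a' where aa: "a \<in> C #> b" "a' \<in> t ` (C #> b)" "y = a \<otimes> a'" unfolding sm_mem by blast
    then obtain c1 c2 where c: "c1 \<in> C" "c2 \<in> C" "y = (c1 \<otimes> b) \<otimes> (t c2 \<otimes> t b)"
      using b unfolding rc_mem tau_img[OF b] by blast
    have "y = c1 \<otimes> (b \<otimes> (t c2 \<otimes> t b))" using c b tb Cc Hc tC by (simp add: m_assoc)
    also have "\<dots> = c1 \<otimes> (t c2 \<otimes> (b \<otimes> t b))" by (simp only: Ccomm3[OF tC[OF c(2)] b Hc[OF tb]])
    also have "\<dots> = (c1 \<otimes> t c2) \<otimes> (b \<otimes> t b)" using c b tb Cc Hc tC by (simp add: m_assoc)
    finally show "y \<in> C" using Cm[OF Cm[OF c(1) tC[OF c(2)]] bt] by simp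
  next
    fix y assume y: "y \<in> C"
    have "y = (y \<otimes> inv (b \<otimes> t b) \<otimes> b) \<otimes> (t \<one> \<otimes> t b)"
      using y bt b tb Cc Hc by (simp add: tone m_assoc inv_mult_group)
    moreover have "y \<otimes> inv (b \<otimes> t b) \<otimes> b \<in> C #> b" unfolding rc_mem using Cm[OF y Ci[OF bt]] by blast
    moreover have "t \<one> \<otimes> t b \<in> t ` (C #> b)" unfolding tau_img[OF b] using C1 by blast
    ultimately show "y \<in> (C #> b) <#> (t ` (C #> b))" unfolding sm_mem by blast
  qed
  moreover have "C #> b \<in> quot_elems E H C" unfolding quot_elems_def using b by blast
  ultimately show ?thesis unfolding Z1_quot_def by blast
qed

lemma refl_rel: "u \<in> Z1_quot E x H C \<Longrightarrow> (u, u) \<in> coh_rel_quot E x H C"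
proof -
  assume u: "u \<in> Z1_quot E x H C"
  have "u \<in> quot_elems E H C" using u unfolding Z1_quot_def by blast
  then obtain z where z: "z \<in> H" "u = C #> z" unfolding quot_elems_def by blast
  have zc: "z \<in> carrier E" using Hc z(1) .
  have "(C #> inv \<one>) <#> u <#> (C #> t \<one>) = u"
  proof (intro equalityI subsetI)
    fix y assume "y \<in> (C #> inv \<one>) <#> u <#> (C #> t \<one>)"
    from sm_mem[THEN iffD1, OF this] obtain a1 a3 where a: "a1 \<in> (C #> inv \<one>) <#> u" "a3 \<in> C #> t \<one>" "y = a1 \<otimes> a3"
      by blast
    from sm_mem[THEN iffD1, OF a(1)] obtain a0 a2 where a': "a0 \<in> C #> inv \<one>" "a2 \<in> u" "a1 = a0 \<otimes> a2"
      by blast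
    from rc_mem[THEN iffD1, OF a'(1)] obtain c1 where c1: "c1 \<in> C" "a0 = c1 \<otimes> inv \<one>" by blast
    from a'(2) have "a2 \<in> C #> z" unfolding z(2) .
    from rc_mem[THEN iffD1, OF this] obtain c2 where c2: "c2 \<in> C" "a2 = c2 \<otimes> z" by blast
    from rc_mem[THEN iffD1, OF a(2)] obtain c3 where c3: "c3 \<in> C" "a3 = c3 \<otimes> t \<one>" by blast
    have cc: "c1 \<in> carrier E" "c2 \<in> carrier E" "c3 \<in> carrier E" using c1 c2 c3 Cc by auto
    have "y = c1 \<otimes> (c2 \<otimes> (z \<otimes> c3))" unfolding a(3) a'(3) c1(2) c2(2) c3(2) tone
      using cc zc by (simp add: m_assoc)
    also have "\<dots> = c1 \<otimes> (c2 \<otimes> (c3 \<otimes> z))" using Ccomm[OF c3(1) z(1)] by simp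
    also have "\<dots> = (c1 \<otimes> c2 \<otimes> c3) \<otimes> z" using cc zc by (simp add: m_assoc)
    finally show "y \<in> u" unfolding z(2) rc_mem using Cm[OF Cm[OF c1(1) c2(1)] c3(1)] by blast
  next
    fix y assume "y \<in> u"
    then obtain c where c: "c \<in> C" "y = c \<otimes> z" unfolding z(2) rc_mem by blast
    have yeq: "y = ((\<one> \<otimes> inv \<one>) \<otimes> (c \<otimes> z)) \<otimes> (\<one> \<otimes> t \<one>)" using c zc Cc by (simp add: tone)
    have h1: "\<one> \<otimes> inv \<one> \<in> C #> inv \<one>" using C1 unfolding rc_mem by blast
    have h2: "c \<otimes> z \<in> u" using c unfolding z(2) rc_mem by blast
    have h3: "\<one> \<otimes> t \<one> \<in> C #> t \<one>" using C1 unfolding rc_mem by blast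
    have m1: "(\<one> \<otimes> inv \<one>) \<otimes> (c \<otimes> z) \<in> (C #> inv \<one>) <#> u"
      using h1 h2 by (intro sm_mem[THEN iffD2]) blast
    show "y \<in> (C #> inv \<one>) <#> u <#> (C #> t \<one>)"
      using m1 h3 yeq by (intro sm_mem[THEN iffD2]) blast
  qed
  then have e: "u = (C #> inv \<one>) <#> u <#> (C #> t \<one>)" by (rule sym)
  have "\<exists>b\<in>H. u = (C #> inv b) <#> u <#> (C #> t b)" using H1 e by (rule bexI[rotated])
  then show ?thesis unfolding coh_rel_quot_def mem_Collect_eq case_prod_conv using u by blast
qed

end

context cset begin
declare [[simp_trace_depth_limit=1]]
lemma welldef:
  assumes b: "b \<in> H" and bt: "b \<otimes> t b \<in> C" and zt: "zt \<in> H"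
    and r: "(C #> b, C #> zt) \<in> coh_rel_quot E x H C"
  shows "H2_class E x C (zt \<otimes> t zt) = H2_class E x C (b \<otimes> t b)"
proof -
  have "\<exists>b0\<in>H. C #> zt = (C #> inv b0) <#> (C #> b) <#> (C #> t b0)"
    using r unfolding coh_rel_quot_def mem_Collect_eq case_prod_conv by blast
  then obtain b0 where b0: "b0 \<in> H" and eq: "C #> zt = (C #> inv b0) <#> (C #> b) <#> (C #> t b0)"
    by blast
  have "\<one> \<otimes> zt \<in> C #> zt" using C1 by (intro rc_mem[THEN iffD2]) blast
  then have "zt \<in> (C #> inv b0) <#> (C #> b) <#> (C #> t b0)" using zt Hc eq by simp
  from sm_mem[THEN iffD1, OF this] obtain a1 a3 where a: "a1 \<in> (C #> inv b0) <#> (C #> b)" "a3 \<in> C #> t b0" "zt = a1 \<otimes> a3"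
    by blast
  from sm_mem[THEN iffD1, OF a(1)] obtain a0 a2 where a': "a0 \<in> C #> inv b0" "a2 \<in> C #> b" "a1 = a0 \<otimes> a2"
    by blast
  from rc_mem[THEN iffD1, OF a'(1)] obtain c1 where c1: "c1 \<in> C" "a0 = c1 \<otimes> inv b0" by blast
  from rc_mem[THEN iffD1, OF a'(2)] obtain c2 where c2: "c2 \<in> C" "a2 = c2 \<otimes> b" by blast
  from rc_mem[THEN iffD1, OF a(2)] obtain c3 where c3: "c3 \<in> C" "a3 = c3 \<otimes> t b0" by blast
  have c: "c1 \<in> C" "c2 \<in> C" "c3 \<in> C"
     "zt = ((c1 \<otimes> inv b0) \<otimes> (c2 \<otimes> b)) \<otimes> (c3 \<otimes> t b0)"
    using c1 c2 c3 a a' by simp_all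
  have tb0: "t b0 \<in> H" using tHH b0 by auto
  have ib0: "inv b0 \<in> H" using Hi b0 by auto
  define w where "w = inv b0 \<otimes> (b \<otimes> t b0)"
  have wH: "w \<in> H" unfolding w_def using Hm b tb0 ib0 by auto
  define c where "c = c1 \<otimes> (c2 \<otimes> c3)"
  have cC: "c \<in> C" unfolding c_def using Cm c by auto
  have car: "c1 \<in> carrier E" "c2 \<in> carrier E" "c3 \<in> carrier E" "b0 \<in> carrier E" "b \<in> carrier E"
     "t b0 \<in> carrier E" "inv b0 \<in> carrier E" "t b \<in> carrier E" "c \<in> carrier E" "w \<in> carrier E"
     "t c \<in> carrier E" "t w \<in> carrier E"
    using c b0 b tb0 ib0 Hc Cc cC wH tc tHH by auto
  have tcC: "t c \<in> C" using tC cC by auto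
  have "zt = c1 \<otimes> (inv b0 \<otimes> (c2 \<otimes> (b \<otimes> (c3 \<otimes> t b0))))" using car c(4) by (simp add: m_assoc)
  also have "\<dots> = c1 \<otimes> (c2 \<otimes> (inv b0 \<otimes> (b \<otimes> (c3 \<otimes> t b0))))"
    by (simp only: Ccomm3[OF c(2) ib0, of "b \<otimes> (c3 \<otimes> t b0)"] car m_closed)
  also have "\<dots> = c1 \<otimes> (c2 \<otimes> (inv b0 \<otimes> (c3 \<otimes> (b \<otimes> t b0))))"
    by (simp only: Ccomm3[OF c(3) b car(6)])
  also have "\<dots> = c1 \<otimes> (c2 \<otimes> (c3 \<otimes> (inv b0 \<otimes> (b \<otimes> t b0))))"
    by (simp only: Ccomm3[OF c(3) ib0, of "b \<otimes> t b0"] car m_closed)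
  also have "\<dots> = c \<otimes> w" unfolding c_def w_def using car by (simp add: m_assoc)
  finally have zt_eq: "zt = c \<otimes> w" .
  have tw: "t w = inv (t b0) \<otimes> (t b \<otimes> b0)" unfolding w_def
    using car b0 by (simp add: tmult tinv tt)
  have "w \<otimes> t w = inv b0 \<otimes> ((b \<otimes> t b) \<otimes> b0)" unfolding tw unfolding w_def
    using car by (simp add: m_assoc)
  also have "\<dots> = inv b0 \<otimes> (b0 \<otimes> (b \<otimes> t b))" by (simp only: Ccomm[OF bt b0])
  also have "\<dots> = b \<otimes> t b" using car by simp
  finally have wtw: "w \<otimes> t w = b \<otimes> t b" .
  have "zt \<otimes> t zt = c \<otimes> (w \<otimes> (t c \<otimes> t w))" unfolding zt_eq
    using car by (simp add: tmult m_assoc)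
  also have "\<dots> = c \<otimes> (t c \<otimes> (w \<otimes> t w))" by (simp only: Ccomm3[OF tcC wH car(12)])
  also have "\<dots> = (c \<otimes> t c) \<otimes> (b \<otimes> t b)" unfolding wtw using car by (simp add: m_assoc)
  also have "\<dots> = (b \<otimes> t b) \<otimes> (c \<otimes> t c)" using Ccomm[OF Cm[OF cC tcC] CH[OF bt]] .
  finally have "zt \<otimes> t zt = (b \<otimes> t b) \<otimes> (c \<otimes> t c)" .
  then show ?thesis using class_shift[OF Cc[OF bt] cC] by simp
qed


lemma part2:
  assumes hh: "hh \<in> C"
  shows "(\<exists>b\<in>H. hh = b \<otimes> t b) \<longleftrightarrow> H2_class E x C hh \<in> connecting E x H C ` H1_quot E x H C"
proof
  assume "\<exists>b\<in>H. hh = b \<otimes> t b"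
  then obtain b where b: "b \<in> H" and hb: "hh = b \<otimes> t b" by blast
  have bt: "b \<otimes> t b \<in> C" using hh hb by simp
  define u where "u = C #> b"
  have uZ: "u \<in> Z1_quot E x H C" unfolding u_def using Z1_intro b bt by auto
  define \<xi> where "\<xi> = coh_rel_quot E x H C `` {u}"
  have xiH: "\<xi> \<in> H1_quot E x H C" unfolding \<xi>_def H1_quot_def using uZ by (rule quotientI)
  let ?P = "\<lambda>k. \<exists>zt\<in>H. (C #> zt) \<in> \<xi> \<and> k = H2_class E x C (zt \<otimes> t zt)"
  have ex: "?P (H2_class E x C (b \<otimes> t b))" using b refl_rel[OF uZ] unfolding \<xi>_def u_def by auto
  have all: "\<And>k. ?P k \<Longrightarrow> k = H2_class E x C (b \<otimes> t b)"
  proof -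
    fix k assume "?P k"
    then obtain zt where zt: "zt \<in> H" "C #> zt \<in> \<xi>" "k = H2_class E x C (zt \<otimes> t zt)" by blast
    have "(C #> b, C #> zt) \<in> coh_rel_quot E x H C" using zt(2) unfolding \<xi>_def u_def by auto
    then show "k = H2_class E x C (b \<otimes> t b)" using welldef[OF b bt zt(1)] zt(3) by simp
  qed
  have "connecting E x H C \<xi> = H2_class E x C hh" unfolding connecting_def hb
    using someI2[of ?P, OF ex all] .
  then show "H2_class E x C hh \<in> connecting E x H C ` H1_quot E x H C" using xiH by force
next
  assume "H2_class E x C hh \<in> connecting E x H C ` H1_quot E x H C"
  then obtain \<xi> where xi: "\<xi> \<in> H1_quot E x H C" and eqc: "H2_class E x C hh = connecting E x H C \<xi>" by blast
  from xi obtain u where uZ: "u \<in> Z1_quot E x H C" and xu: "\<xi> = coh_rel_quot E x H C `` {u}"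
    unfolding H1_quot_def by (rule quotientE)
  then obtain z where z: "z \<in> H" "u = C #> z" unfolding Z1_quot_def quot_elems_def by auto
  let ?P = "\<lambda>k. \<exists>zt\<in>H. (C #> zt) \<in> \<xi> \<and> k = H2_class E x C (zt \<otimes> t zt)"
  have ex: "?P (H2_class E x C (z \<otimes> t z))" using z refl_rel[OF uZ] unfolding xu by auto
  have "?P (connecting E x H C \<xi>)" unfolding connecting_def using someI[of ?P, OF ex] .
  then obtain zt where zt: "zt \<in> H" "H2_class E x C hh = H2_class E x C (zt \<otimes> t zt)" using eqc by auto
  have "\<one> \<otimes> t \<one> \<in> B2 E x C" unfolding B2_mem using C1 by blast
  then have o: "\<one> \<in> B2 E x C" by (simp add: tone)
  have "hh \<otimes> \<one> \<in> H2_class E x C hh" unfolding H2_class_def using o by (intro lc_mem[THEN iffD2]) blast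
  then have "hh \<in> H2_class E x C hh" using hh Cc by simp
  then have "hh \<in> (zt \<otimes> t zt) <# B2 E x C" using zt(2) unfolding H2_class_def by simp
  from lc_mem[THEN iffD1, OF this] obtain d where d: "d \<in> B2 E x C" "hh = (zt \<otimes> t zt) \<otimes> d" by blast
  from B2_mem[THEN iffD1, OF d(1)] obtain c where c0: "c \<in> C" "d = c \<otimes> t c" by blast
  have c: "c \<in> C" "hh = (zt \<otimes> t zt) \<otimes> (c \<otimes> t c)" using c0 d by simp_all
  have car: "zt \<in> carrier E" "t zt \<in> carrier E" "c \<in> carrier E" "t c \<in> carrier E"
    using zt c Hc Cc tHH tC by auto
  have "hh = zt \<otimes> (t zt \<otimes> (c \<otimes> t c))" using c car by (simp add: m_assoc)
  also have "\<dots> = zt \<otimes> (c \<otimes> (t zt \<otimes> t c))" using Ccomm3[OF c(1) tHH[OF zt(1)] car(4)] by simp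
  also have "\<dots> = (zt \<otimes> c) \<otimes> t (zt \<otimes> c)" using car by (simp add: tmult m_assoc)
  finally show "\<exists>b\<in>H. hh = b \<otimes> t b" using Hm zt(1) CH c(1) by blast
qed

end

theorem corollary7p6:
  fixes E :: "('e,'m) monoid_scheme" and Gam :: "('g,'n) monoid_scheme"
    and \<pi> :: "'e \<Rightarrow> 'g" and \<gamma> :: 'g and x' :: 'e
  defines "H \<equiv> kernel E Gam \<pi>"
  defines "C \<equiv> center_of E (kernel E Gam \<pi>)"
  assumes "group E" and "group Gam"
    and "carrier Gam = {\<one>\<^bsub>Gam\<^esub>, \<gamma>}" and "\<gamma> \<noteq> \<one>\<^bsub>Gam\<^esub>"
    and "\<pi> \<in> hom E Gam" and "\<pi> ` carrier E = carrier Gam"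
    and "x' \<in> carrier E" and "\<pi> x' = \<gamma>"
    and "x' \<otimes>\<^bsub>E\<^esub> x' \<in> C"
  shows "((\<exists>x\<in>carrier E. \<pi> x = \<gamma> \<and> x \<otimes>\<^bsub>E\<^esub> x = \<one>\<^bsub>E\<^esub>)
            \<longleftrightarrow> (\<exists>b\<in>H. inv\<^bsub>E\<^esub> (x' \<otimes>\<^bsub>E\<^esub> x') = b \<otimes>\<^bsub>E\<^esub> tauH E x' b))
       \<and> ((\<exists>b\<in>H. inv\<^bsub>E\<^esub> (x' \<otimes>\<^bsub>E\<^esub> x') = b \<otimes>\<^bsub>E\<^esub> tauH E x' b)
            \<longleftrightarrow> H2_class E x' C (inv\<^bsub>E\<^esub> (x' \<otimes>\<^bsub>E\<^esub> x'))
                  \<in> connecting E x' H C ` H1_quot E x' H C)"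
proof -
  note as = assms
  interpret G: group E by fact
  interpret Gm: group Gam by fact
  interpret gh: group_hom E Gam \<pi> using as by (simp add: group_hom_def group_hom_axioms_def)
  have Hk: "\<And>h. h \<in> H \<longleftrightarrow> h \<in> carrier E \<and> \<pi> h = \<one>\<^bsub>Gam\<^esub>" unfolding H_def kernel_def by auto
  have gc: "\<gamma> \<in> carrier Gam" using as by auto
  have px: "\<pi> x' = \<gamma>" by fact
  have xc: "x' \<in> carrier E" by fact
  have xxC: "x' \<otimes>\<^bsub>E\<^esub> x' \<in> C" by fact
  have cs: "cset E H C x'"
  proof (unfold_locales)
    show "H \<subseteq> carrier E" using Hk by auto
    show "\<one>\<^bsub>E\<^esub> \<in> H" using Hk by simp
    show "\<And>a b. a \<in> H \<Longrightarrow> b \<in> H \<Longrightarrow> a \<otimes>\<^bsub>E\<^esub> b \<in> H" using Hk by simp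
    show "\<And>a. a \<in> H \<Longrightarrow> inv\<^bsub>E\<^esub> a \<in> H" using Hk by (simp add: gh.hom_inv)
    show "C = center_of E H" unfolding C_def H_def ..
    show "x' \<in> carrier E" by fact
    show "\<And>h. h \<in> H \<Longrightarrow> x' \<otimes>\<^bsub>E\<^esub> h \<otimes>\<^bsub>E\<^esub> inv\<^bsub>E\<^esub> x' \<in> H" using Hk px gc xc by (simp add: gh.hom_inv Gm.m_assoc)
    show "\<And>h. h \<in> H \<Longrightarrow> inv\<^bsub>E\<^esub> x' \<otimes>\<^bsub>E\<^esub> h \<otimes>\<^bsub>E\<^esub> x' \<in> H" using Hk px gc xc by (simp add: gh.hom_inv Gm.m_assoc)
    show "x' \<otimes>\<^bsub>E\<^esub> x' \<in> C" by fact
  qed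
  interpret cs: cset E H C x' by (rule cs)
  have p1: "(\<exists>x\<in>carrier E. \<pi> x = \<gamma> \<and> x \<otimes>\<^bsub>E\<^esub> x = \<one>\<^bsub>E\<^esub>)
            \<longleftrightarrow> (\<exists>b\<in>H. inv\<^bsub>E\<^esub> (x' \<otimes>\<^bsub>E\<^esub> x') = b \<otimes>\<^bsub>E\<^esub> tauH E x' b)"
  proof
    assume "\<exists>x\<in>carrier E. \<pi> x = \<gamma> \<and> x \<otimes>\<^bsub>E\<^esub> x = \<one>\<^bsub>E\<^esub>"
    then obtain y where y: "y \<in> carrier E" "\<pi> y = \<gamma>" "y \<otimes>\<^bsub>E\<^esub> y = \<one>\<^bsub>E\<^esub>" by blast
    define b where "b = y \<otimes>\<^bsub>E\<^esub> inv\<^bsub>E\<^esub> x'"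
    have bH: "b \<in> H" unfolding b_def using Hk y xc px gc by (simp add: gh.hom_inv)
    have "b \<otimes>\<^bsub>E\<^esub> tauH E x' b = y \<otimes>\<^bsub>E\<^esub> (y \<otimes>\<^bsub>E\<^esub> (inv\<^bsub>E\<^esub> x' \<otimes>\<^bsub>E\<^esub> inv\<^bsub>E\<^esub> x'))"
      unfolding b_def cs.tdef using y xc by (simp add: G.m_assoc)
    also have "\<dots> = inv\<^bsub>E\<^esub> (x' \<otimes>\<^bsub>E\<^esub> x')" using y xc
      by (simp add: G.m_assoc[symmetric] G.inv_mult_group)
    finally show "\<exists>b\<in>H. inv\<^bsub>E\<^esub> (x' \<otimes>\<^bsub>E\<^esub> x') = b \<otimes>\<^bsub>E\<^esub> tauH E x' b" using bH by metis
  next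
    assume "\<exists>b\<in>H. inv\<^bsub>E\<^esub> (x' \<otimes>\<^bsub>E\<^esub> x') = b \<otimes>\<^bsub>E\<^esub> tauH E x' b"
    then obtain b where bH: "b \<in> H" and hb: "inv\<^bsub>E\<^esub> (x' \<otimes>\<^bsub>E\<^esub> x') = b \<otimes>\<^bsub>E\<^esub> tauH E x' b" by blast
    have bc: "b \<in> carrier E" using bH Hk by auto
    define y where "y = b \<otimes>\<^bsub>E\<^esub> x'"
    have yc: "y \<in> carrier E" unfolding y_def using bc xc by simp
    have py: "\<pi> y = \<gamma>" unfolding y_def using bc xc bH Hk px gc by simp
    have "y \<otimes>\<^bsub>E\<^esub> y = (b \<otimes>\<^bsub>E\<^esub> tauH E x' b) \<otimes>\<^bsub>E\<^esub> (x' \<otimes>\<^bsub>E\<^esub> x')"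
      unfolding y_def cs.tdef using bc xc by (simp add: G.m_assoc)
    also have "\<dots> = \<one>\<^bsub>E\<^esub>" unfolding hb[symmetric] using xc by simp
    finally show "\<exists>x\<in>carrier E. \<pi> x = \<gamma> \<and> x \<otimes>\<^bsub>E\<^esub> x = \<one>\<^bsub>E\<^esub>" using yc py by blast
  qed
  note p2 = cs.part2[OF cs.Ci[OF xxC]]
  show ?thesis using p1 p2 by blast
qed

end
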